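(* Let $d\geq 1$ and let $F\in C^1(\mathbb{R}^d)^d$ satisfy $F(x+k)=F(x)+k$ for all $k\in\mathbb{Z}^d$ and $x\in\mathbb{R}^d$. Suppose there exists a $\mathbb{Z}^d$-periodic vector field $b\in C^1(\mathbb{R}^d)^d$ such that $F=X(1,\cdot)$, where $X$ is the flow of $b$. Then $$(\nabla F(x))\,b(x)=b(F(x))\quad\text{for all }x\in\mathbb{R}^d .$$ Moreover, for every $a\in\mathbb{R}^d$ such that $F(a)-a\in\mathbb{Z}^d$ and $\det(\nabla F(a)-I_d)\neq 0$, one has $b(a)=0_{\mathbb{R}^d}$.
   Context: For a $\mathbb{Z}^d$-periodic $b\in C^1(\mathbb{R}^d)^d$, the flow $X:\mathbb{R}\times\mathbb{R}^d\to\mathbb{R}^d$ is defined by $\partial_t X(t,x)=b(X(t,x))$, $X(0,x)=x$. $\nabla F$ denotes the Jacobian matrix of $F$ and $I_d$ the identity matrix. *)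

theory Defs
  imports "HOL-Analysis.Analysis"
begin

definition integer_vector :: "real^'n \<Rightarrow> bool" where
  "integer_vector k \<longleftrightarrow> (\<forall>i. k $ i \<in> \<int>)"

end

theory Submission
  imports Defs
begin

lemma ode_unique_fwd:
  fixes f :: "real^'n \<Rightarrow> real^'n" and D :: "real^'n \<Rightarrow> real^'n^'n"
    and y z :: "real \<Rightarrow> real^'n"
  assumes fd: "\<And>x. (f has_derivative (\<lambda>h. D x *v h)) (at x)"
    and Dc: "continuous_on UNIV D"
    and yd: "\<And>t. (y has_vector_derivative f (y t)) (at t)"
    and zd: "\<And>t. (z has_vector_derivative f (z t)) (at t)"
    and y0: "y 0 = z 0" and T: "0 \<le> T"
  shows "y T = z T"
proof -
  have cy: "continuous_on {0..T} y"
    by (meson continuous_at_imp_continuous_on has_vector_derivative_continuous yd)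
  have cz: "continuous_on {0..T} z"
    by (meson continuous_at_imp_continuous_on has_vector_derivative_continuous zd)
  have "compact (y ` {0..T} \<union> z ` {0..T})"
    using cy cz by (intro compact_Un compact_continuous_image) auto
  then obtain R where R: "\<And>p. p \<in> y ` {0..T} \<union> z ` {0..T} \<Longrightarrow> norm p \<le> R"
    by (meson bounded_iff compact_imp_bounded)
  define S where "S = cball (0::real^'n) R"
  have "compact ((\<lambda>x. norm (D x)) ` S)"
    unfolding S_def
    by (intro compact_continuous_image continuous_on_norm continuous_on_subset[OF Dc]) auto
  then have "bounded ((\<lambda>x. norm (D x)) ` S)" by (rule compact_imp_bounded)
  then obtain M0 where M0: "\<And>v. v \<in> (\<lambda>x. norm (D x)) ` S \<Longrightarrow> norm v \<le> M0"
    unfolding bounded_iff by blast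
  obtain M where M: "\<And>x. x \<in> S \<Longrightarrow> norm (D x) \<le> M"
    using M0 by fastforce
  define L where "L = real CARD('n) * real CARD('n) * max M 0"
  have L0: "L \<ge> 0" unfolding L_def by simp
  have lip: "norm (f u - f v) \<le> L * norm (u - v)" if "u \<in> S" "v \<in> S" for u v
  proof (rule differentiable_bound[where f' = "\<lambda>x h. D x *v h" and S = S])
    show "convex S" unfolding S_def by simp
    show "(f has_derivative (\<lambda>h. D x *v h)) (at x within S)" for x
      using fd has_derivative_at_withinI by blast
    show "onorm (\<lambda>h. D x *v h) \<le> L" if "x \<in> S" for x
    proof -
      have "\<bar>D x $ i $ j\<bar> \<le> max M 0" for i j
        using M[OF that] Finite_Cartesian_Product.norm_nth_le[of "D x" i] component_le_norm_cart[of "D x $ i" j]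
        by (meson max.coboundedI1 order_trans)
      then show ?thesis unfolding L_def using onorm_le_matrix_component[of "D x" "max M 0"]
        by simp
    qed
  qed (use that in auto)
  define w where "w s = (y s - z s) \<bullet> (y s - z s)" for s
  define g where "g s = exp (-2 * L * s) * w s" for s
  have wd: "(w has_real_derivative 2 * ((y s - z s) \<bullet> (f (y s) - f (z s)))) (at s)" for s
  proof -
    have d: "((\<lambda>s. y s - z s) has_derivative (\<lambda>h. h *\<^sub>R (f (y s) - f (z s)))) (at s)"
      using has_vector_derivative_diff[OF yd zd] unfolding has_vector_derivative_def by simp
    have "(w has_derivative (\<lambda>h. (y s - z s) \<bullet> (h *\<^sub>R (f (y s) - f (z s))) + (h *\<^sub>R (f (y s) - f (z s))) \<bullet> (y s - z s))) (at s)"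
      unfolding w_def by (rule has_derivative_inner[OF d d])
    then show ?thesis unfolding has_field_derivative_def
      by (rule has_derivative_eq_rhs) (auto simp: inner_commute algebra_simps)
  qed
  have wbound: "2 * ((y s - z s) \<bullet> (f (y s) - f (z s))) \<le> 2 * L * w s" if "s \<in> {0..T}" for s
  proof -
    have "y s \<in> S" "z s \<in> S" using R that unfolding S_def by auto
    then have "norm (f (y s) - f (z s)) \<le> L * norm (y s - z s)" by (rule lip)
    moreover have "(y s - z s) \<bullet> (f (y s) - f (z s)) \<le> norm (y s - z s) * norm (f (y s) - f (z s))"
      by (rule norm_cauchy_schwarz)
    ultimately have "(y s - z s) \<bullet> (f (y s) - f (z s)) \<le> norm (y s - z s) * (L * norm (y s - z s))"
      by (meson mult_left_mono norm_ge_zero order_trans)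
    moreover have "w s = norm (y s - z s) * norm (y s - z s)"
      unfolding w_def by (simp add: power2_norm_eq_inner[symmetric] power2_eq_square)
    ultimately show ?thesis by (simp add: algebra_simps)
  qed
  have "g T \<le> g 0"
  proof (rule DERIV_nonpos_imp_nonincreasing[OF T])
    fix s assume s: "0 \<le> s" "s \<le> T"
    have "(g has_real_derivative (exp (-2 * L * s) * (-2 * L)) * w s + exp (-2 * L * s) * (2 * ((y s - z s) \<bullet> (f (y s) - f (z s))))) (at s)"
    proof -
      have e: "((\<lambda>s. exp (-2 * L * s)) has_real_derivative exp (-2 * L * s) * (-2 * L)) (at s)"
        by (auto intro!: derivative_eq_intros)
      show ?thesis unfolding g_def
        by (rule DERIV_cong[OF DERIV_mult[OF e wd[of s]]]) (simp add: algebra_simps)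
    qed
    moreover have "(exp (-2 * L * s) * (-2 * L)) * w s + exp (-2 * L * s) * (2 * ((y s - z s) \<bullet> (f (y s) - f (z s)))) \<le> 0"
    proof -
      have "exp (-2 * L * s) * (2 * ((y s - z s) \<bullet> (f (y s) - f (z s)))) \<le> exp (-2 * L * s) * (2 * L * w s)"
        using wbound[of s] s by (intro mult_left_mono) auto
      then show ?thesis by (simp add: algebra_simps)
    qed
    ultimately show "\<exists>d. (g has_real_derivative d) (at s) \<and> d \<le> 0" by blast
  qed
  moreover have "g 0 = 0" unfolding g_def w_def using y0 by simp
  moreover have "w T \<ge> 0" unfolding w_def by simp
  ultimately have "w T = 0" unfolding g_def
    by (smt (verit) exp_gt_zero mult_pos_pos)
  then show ?thesis unfolding w_def by simp
qed



lemma ode_unique: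
  fixes f :: "real^'n \<Rightarrow> real^'n" and D :: "real^'n \<Rightarrow> real^'n^'n"
    and y z :: "real \<Rightarrow> real^'n"
  assumes fd: "\<And>x. (f has_derivative (\<lambda>h. D x *v h)) (at x)"
    and Dc: "continuous_on UNIV D"
    and yd: "\<And>t. (y has_vector_derivative f (y t)) (at t)"
    and zd: "\<And>t. (z has_vector_derivative f (z t)) (at t)"
    and y0: "y 0 = z 0"
  shows "y T = z T"
proof (cases "0 \<le> T")
  case True
  then show ?thesis using ode_unique_fwd[OF fd Dc yd zd y0] by blast
next
  case False
  have fd': "((\<lambda>x. - f x) has_derivative (\<lambda>h. (- D x) *v h)) (at x)" for x
  proof -
    have neg: "(- A) *v h = - (A *v h)" for A :: "real^'n^'n" and h
      using matrix_vector_mult_diff_rdistrib[of 0 A h] by simp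
    show ?thesis using has_derivative_minus[OF fd[of x]] by (simp add: neg)
  qed
  have Dc': "continuous_on UNIV (\<lambda>x. - D x)" using Dc by (intro continuous_intros)
  have rev: "((\<lambda>t. u (- t)) has_vector_derivative - f (u (- t))) (at t)"
    if ud: "\<And>t. (u has_vector_derivative f (u t)) (at t)" for u :: "real \<Rightarrow> real^'n" and t
  proof -
    have m: "(uminus has_vector_derivative (-1::real)) (at t)"
      by (auto intro!: derivative_eq_intros)
    have "((u \<circ> uminus) has_vector_derivative (-1::real) *\<^sub>R f (u (- t))) (at t)"
      by (rule vector_diff_chain_at[OF m]) (use ud in simp)
    then show ?thesis by (simp add: o_def)
  qed
  have "(\<lambda>t. y (- t)) (- T) = (\<lambda>t. z (- t)) (- T)"
    by (rule ode_unique_fwd[where f = "\<lambda>x. - f x" and D = "\<lambda>x. - D x", OF fd' Dc' rev[OF yd] rev[OF zd]])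
      (use y0 False in auto)
  then show ?thesis by simp
qed

theorem proposition2p1:
  fixes F b :: "real^'n \<Rightarrow> real^'n"
    and DF Db :: "real^'n \<Rightarrow> real^'n^'n"
    and X :: "real \<Rightarrow> real^'n \<Rightarrow> real^'n"
  assumes F_deriv: "\<And>x. (F has_derivative (\<lambda>h. DF x *v h)) (at x)"
    and F_C1: "continuous_on UNIV DF"
    and F_shift: "\<And>x k. integer_vector k \<Longrightarrow> F (x + k) = F x + k"
    and b_deriv: "\<And>x. (b has_derivative (\<lambda>h. Db x *v h)) (at x)"
    and b_C1: "continuous_on UNIV Db"
    and b_periodic: "\<And>x k. integer_vector k \<Longrightarrow> b (x + k) = b x"
    and X_ode: "\<And>t x. ((\<lambda>s. X s x) has_vector_derivative b (X t x)) (at t)"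
    and X_init: "\<And>x. X 0 x = x"
    and F_time1: "\<And>x. F x = X 1 x"
  shows "(\<forall>x. DF x *v b x = b (F x)) \<and>
         (\<forall>a. integer_vector (F a - a) \<and> det (DF a - mat 1) \<noteq> 0 \<longrightarrow> b a = 0)"
proof -
  have flow: "X s (X t x) = X (s + t) x" for s t x
  proof -
    have sh: "((\<lambda>s. X (s + t) x) has_vector_derivative b (X (s + t) x)) (at s)" for s
    proof -
      have m: "((\<lambda>s. s + t) has_vector_derivative (1::real)) (at s)"
        by (auto intro!: derivative_eq_intros)
      have "(((\<lambda>r. X r x) \<circ> (\<lambda>s. s + t)) has_vector_derivative (1::real) *\<^sub>R b (X (s + t) x)) (at s)"
        by (rule vector_diff_chain_at[OF m]) (use X_ode in simp)
      then show ?thesis by (simp add: o_def)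
    qed
    have "(\<lambda>s. X s (X t x)) s = (\<lambda>s. X (s + t) x) s"
      by (rule ode_unique[OF b_deriv b_C1 X_ode sh]) (simp add: X_init)
    then show ?thesis by simp
  qed
  have part1: "DF x *v b x = b (F x)" for x
  proof -
    have comm: "F (X t x) = X t (F x)" for t
      using flow[of 1 t x] flow[of t 1 x] F_time1 by (simp add: add.commute)
    have d1: "((F \<circ> (\<lambda>t. X t x)) has_derivative (\<lambda>h. DF x *v (h *\<^sub>R b x))) (at 0)"
    proof -
      have "((\<lambda>t. X t x) has_derivative (\<lambda>h. h *\<^sub>R b x)) (at 0)"
        using X_ode[where t=0 and x=x] by (simp add: has_vector_derivative_def X_init)
      moreover have "(F has_derivative (\<lambda>h. DF x *v h)) (at ((\<lambda>t. X t x) 0))"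
        using F_deriv by (simp add: X_init)
      ultimately show ?thesis using diff_chain_at by (fastforce simp: o_def)
    qed
    have "((\<lambda>t. F (X t x)) has_vector_derivative DF x *v b x) (at 0)"
      using d1 unfolding has_vector_derivative_def o_def
      by (simp add: matrix_vector_mult_scaleR)
    moreover have "((\<lambda>t. F (X t x)) has_vector_derivative b (F x)) (at 0)"
      using X_ode[where t=0 and x="F x"] by (simp add: comm X_init)
    ultimately show ?thesis by (rule vector_derivative_unique_at)
  qed
  have part2: "b a = 0" if ia: "integer_vector (F a - a)" and dn: "det (DF a - mat 1) \<noteq> 0" for a
  proof -
    have "b (F a) = b a"
      using b_periodic[OF ia, of a] by simp
    then have "DF a *v b a = b a" using part1[of a] by simp
    then have "(DF a - mat 1) *v b a = (DF a - mat 1) *v 0"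
      by (simp add: matrix_vector_mult_diff_rdistrib)
    moreover have "inj ((*v) (DF a - mat 1))"
      using dn invertible_det_nz inj_matrix_vector_mult by blast
    ultimately show ?thesis by (meson injD)
  qed
  show ?thesis using part1 part2 by blast
qed

end
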